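(* Let $V$ be a Majorana algebra with a set $A$ of Majorana axes generating $V$. Then the group $G = \langle \tau(a) \mid a \in A\rangle$ acts faithfully on $A$.
   Context: Let $V$ be a real vector space with a positive definite symmetric bilinear form $(\,,\,)$ and a bilinear commutative (non-associative) product $\cdot$ such that (M1) $(u, v\cdot w) = (u\cdot v, w)$ and (M2) $(u\cdot u, v\cdot v)\ge (u\cdot v, u\cdot v)$ for all $u,v,w \in V$. For $a \in V$ write $V_\mu^{(a)} = \{v : a\cdot v = \mu v\}$. A Majorana axis is a nonzero $a\in V$ with: (M3) $(a,a)=1$, $a\cdot a=a$; (M4) $V = V_1^{(a)}\oplus V_0^{(a)}\oplus V_{1/4}^{(a)} \oplus V_{1/32}^{(a)}$; (M5) $V_1^{(a)}=\mathbb{R}a$; (M6) the linear map $\tau(a)$ acting as $+1$ on $V_1^{(a)}\oplus V_0^{(a)}\oplus V_{1/4}^{(a)}$ and $-1$ on $V_{1/32}^{(a)}$ is an algebra automorphism; (M7) on $V_+^{(a)}=V_1^{(a)}\oplus V_0^{(a)}\oplus V_{1/4}^{(a)}$ the map acting as $+1$ on $V_1^{(a)}\oplus V_0^{(a)}$ and $-1$ on $V_{1/4}^{(a)}$ preserves the product restricted to $V_+^{(a)}$. A Majorana algebra is such a $V$ generated as an algebra by a set $A$ of Majorana axes. Standing convention: the set $A$ is assumed closed under the action of $G=\langle \tau(a)\mid a\in A\rangle$ (acting on the right). *)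

theory Defs
  imports "HOL-Analysis.Analysis"
begin

text \<open>The ambient space V is a type of class real_inner; its inner product is the
positive definite symmetric bilinear form. The algebra product is a parameter prd.\<close>

definition eigsp :: "('v::real_vector \<Rightarrow> 'v \<Rightarrow> 'v) \<Rightarrow> 'v \<Rightarrow> real \<Rightarrow> 'v set" where
  "eigsp prd a \<mu> = {v. prd a v = \<mu> *\<^sub>R v}"

definition Vplus :: "('v::real_vector \<Rightarrow> 'v \<Rightarrow> 'v) \<Rightarrow> 'v \<Rightarrow> 'v set" where
  "Vplus prd a = {x + y + z | x y z. x \<in> eigsp prd a 1 \<and> y \<in> eigsp prd a 0 \<and> z \<in> eigsp prd a (1/4)}"

definition tau :: "('v::real_vector \<Rightarrow> 'v \<Rightarrow> 'v) \<Rightarrow> 'v \<Rightarrow> 'v \<Rightarrow> 'v" where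
  "tau prd a v = (SOME w. \<exists>x y. x \<in> Vplus prd a \<and> y \<in> eigsp prd a (1/32) \<and> v = x + y \<and> w = x - y)"

definition sigma :: "('v::real_vector \<Rightarrow> 'v \<Rightarrow> 'v) \<Rightarrow> 'v \<Rightarrow> 'v \<Rightarrow> 'v" where
  "sigma prd a v = (SOME w. \<exists>x y z. x \<in> eigsp prd a 1 \<and> y \<in> eigsp prd a 0 \<and> z \<in> eigsp prd a (1/4)
                       \<and> v = x + y + z \<and> w = x + y - z)"

definition majorana_axis :: "('v::real_inner \<Rightarrow> 'v \<Rightarrow> 'v) \<Rightarrow> 'v \<Rightarrow> bool" where
  "majorana_axis prd a \<longleftrightarrow>
     a \<noteq> 0 \<and>
     inner a a = 1 \<and> prd a a = a \<and>
     (\<forall>v. \<exists>v1 v0 v4 v32. v1 \<in> eigsp prd a 1 \<and> v0 \<in> eigsp prd a 0 \<and> v4 \<in> eigsp prd a (1/4)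
            \<and> v32 \<in> eigsp prd a (1/32) \<and> v = v1 + v0 + v4 + v32) \<and>
     eigsp prd a 1 = {c *\<^sub>R a | c. True} \<and>
     (bij (tau prd a) \<and> linear (tau prd a) \<and>
        (\<forall>u v. tau prd a (prd u v) = prd (tau prd a u) (tau prd a v))) \<and>
     (\<forall>u\<in>Vplus prd a. \<forall>v\<in>Vplus prd a. sigma prd a (prd u v) = prd (sigma prd a u) (sigma prd a v))"

inductive_set alg_gen :: "('v::real_vector \<Rightarrow> 'v \<Rightarrow> 'v) \<Rightarrow> 'v set \<Rightarrow> 'v set"
  for prd :: "'v \<Rightarrow> 'v \<Rightarrow> 'v" and S :: "'v set" where
  base: "a \<in> S \<Longrightarrow> a \<in> alg_gen prd S"
| zero: "0 \<in> alg_gen prd S"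
| add: "x \<in> alg_gen prd S \<Longrightarrow> y \<in> alg_gen prd S \<Longrightarrow> x + y \<in> alg_gen prd S"
| scale: "x \<in> alg_gen prd S \<Longrightarrow> c *\<^sub>R x \<in> alg_gen prd S"
| mult: "x \<in> alg_gen prd S \<Longrightarrow> y \<in> alg_gen prd S \<Longrightarrow> prd x y \<in> alg_gen prd S"

inductive_set gen_group :: "('v \<Rightarrow> 'v) set \<Rightarrow> ('v \<Rightarrow> 'v) set"
  for T :: "('v \<Rightarrow> 'v) set" where
  ident: "id \<in> gen_group T"
| gen: "t \<in> T \<Longrightarrow> g \<in> gen_group T \<Longrightarrow> t \<circ> g \<in> gen_group T"
| geninv: "t \<in> T \<Longrightarrow> g \<in> gen_group T \<Longrightarrow> inv t \<circ> g \<in> gen_group T"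

definition majorana_algebra :: "('v::real_inner \<Rightarrow> 'v \<Rightarrow> 'v) \<Rightarrow> 'v set \<Rightarrow> bool" where
  "majorana_algebra prd A \<longleftrightarrow>
     bilinear prd \<and> (\<forall>u v. prd u v = prd v u) \<and>
     (\<forall>u v w. inner u (prd v w) = inner (prd u v) w) \<and>
     (\<forall>u v. inner (prd u u) (prd v v) \<ge> inner (prd u v) (prd u v)) \<and>
     (\<forall>a\<in>A. majorana_axis prd a) \<and>
     alg_gen prd A = UNIV"

definition tau_group :: "('v::real_vector \<Rightarrow> 'v \<Rightarrow> 'v) \<Rightarrow> 'v set \<Rightarrow> ('v \<Rightarrow> 'v) set" where
  "tau_group prd A = gen_group (tau prd ` A)"

end

theory Submission
  imports Defs
begin

definition ishom :: "('v::real_vector \<Rightarrow> 'v \<Rightarrow> 'v) \<Rightarrow> ('v \<Rightarrow> 'v) \<Rightarrow> bool" where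
  "ishom prd g \<longleftrightarrow> (\<forall>x y. g (x + y) = g x + g y) \<and> (\<forall>c x. g (c *\<^sub>R x) = c *\<^sub>R g x)
     \<and> (\<forall>u v. g (prd u v) = prd (g u) (g v))"

lemma ishom_comp: "ishom prd f \<Longrightarrow> ishom prd g \<Longrightarrow> ishom prd (f \<circ> g)"
  unfolding ishom_def by simp

lemma ishom_inv:
  assumes h: "ishom prd t" and b: "bij t"
  shows "ishom prd (inv t)"
proof -
  have inj: "inj t" using b bij_is_inj by auto
  have s: "\<And>x. t (inv t x) = x" using b by (simp add: bij_is_surj surj_f_inv_f)
  have "\<And>x y. inv t (x + y) = inv t x + inv t y"
  proof -
    fix x y
    have "t (inv t x + inv t y) = x + y" using h s unfolding ishom_def by simp
    then show "inv t (x + y) = inv t x + inv t y" using inj by (metis inv_f_f)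
  qed
  moreover have "\<And>c x. inv t (c *\<^sub>R x) = c *\<^sub>R inv t x"
  proof -
    fix c x
    have "t (c *\<^sub>R inv t x) = c *\<^sub>R x" using h s unfolding ishom_def by simp
    then show "inv t (c *\<^sub>R x) = c *\<^sub>R inv t x" using inj by (metis inv_f_f)
  qed
  moreover have "\<And>u v. inv t (prd u v) = prd (inv t u) (inv t v)"
  proof -
    fix u v
    have "t (prd (inv t u) (inv t v)) = prd u v" using h s unfolding ishom_def by simp
    then show "inv t (prd u v) = prd (inv t u) (inv t v)" using inj by (metis inv_f_f)
  qed
  ultimately show ?thesis unfolding ishom_def by blast
qed

lemma tau_hom:
  assumes "majorana_axis prd a"
  shows "ishom prd (tau prd a)" "bij (tau prd a)"
proof -
  have l: "linear (tau prd a)" and m: "\<forall>u v. tau prd a (prd u v) = prd (tau prd a u) (tau prd a v)"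
    and "bij (tau prd a)"
    using assms unfolding majorana_axis_def by auto
  then show "bij (tau prd a)" by simp
  show "ishom prd (tau prd a)" unfolding ishom_def
    using m linear_add[OF l] linear_scale[OF l] by simp
qed

lemma group_hom:
  assumes "\<forall>a\<in>A. majorana_axis prd a" and "g \<in> gen_group (tau prd ` A)"
  shows "ishom prd g"
  using assms(2)
proof induct
  case ident
  then show ?case unfolding ishom_def by simp
next
  case (gen t g)
  then show ?case using tau_hom assms(1) ishom_comp by blast
next
  case (geninv t g)
  then show ?case using tau_hom assms(1) ishom_comp ishom_inv by blast
qed

theorem mainTheorem5:
  fixes prd :: "'v::real_inner \<Rightarrow> 'v \<Rightarrow> 'v" and A :: "'v set"
  assumes "majorana_algebra prd A"
    and "\<forall>g\<in>tau_group prd A. \<forall>a\<in>A. g a \<in> A"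
  shows "\<forall>g\<in>tau_group prd A. (\<forall>a\<in>A. g a = a) \<longrightarrow> g = id"
proof (intro ballI impI)
  fix g assume g: "g \<in> tau_group prd A" and fix_: "\<forall>a\<in>A. g a = a"
  have ax: "\<forall>a\<in>A. majorana_axis prd a" and gen: "alg_gen prd A = UNIV"
    using assms(1) unfolding majorana_algebra_def by auto
  have h: "ishom prd g" using group_hom[OF ax] g unfolding tau_group_def by blast
  have "\<And>v. v \<in> alg_gen prd A \<Longrightarrow> g v = v"
  proof -
    fix v assume "v \<in> alg_gen prd A"
    then show "g v = v"
    proof induct
      case (base a) then show ?case using fix_ by simp
    next
      case zero
      have "g ((0::real) *\<^sub>R 0) = 0 *\<^sub>R g 0" using h unfolding ishom_def by blast
      then show ?case by simp
    next
      case (add x y) then show ?case using h unfolding ishom_def by simp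
    next
      case (scale x c) then show ?case using h unfolding ishom_def by simp
    next
      case (mult x y) then show ?case using h unfolding ishom_def by simp
    qed
  qed
  then show "g = id" using gen by auto
qed

end
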